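(* Let $\mathcal{W}=\{1,\ldots,n\}$ be a finite vocabulary, let $\#(i,j)\ge 0$ be co-occurrence counts for $i,j\in\mathcal{W}$ with $\#(i,j)>0$ for all $i,j$, let $N=\sum_{i,j\in\mathcal{W}}\#(i,j)$, $\#(i)=\sum_{j\in\mathcal{W}}\#(i,j)$, $p(i,j)=\#(i,j)/N$, $p(i)=\#(i)/N$, and let $k>0$ be the number of negative samples. Suppose $\mathbf{w}_i,\mathbf{c}_j\in\mathbb{R}^d$ satisfy $0<\langle\mathbf{w}_i,\mathbf{c}_j\rangle<1$ for all $i,j$. Consider the objective $$\mathcal{L}=\sum_{i\in\mathcal{W}}\sum_{j\in\mathcal{W}}\#(i,j)\Big(\log\langle\mathbf{w}_i,\mathbf{c}_j\rangle+k\cdot\mathbb{E}_{j'\sim P}\big[\log(1-\langle\mathbf{w}_i,\mathbf{c}_{j'}\rangle)\big]\Big),$$ where $P$ is the unigram distribution $P(j')=p(j')$. Then, viewing $\mathcal{L}$ as a function of the quantities $x_{ij}=\langle\mathbf{w}_i,\mathbf{c}_j\rangle\in(0,1)$ treated as independent variables, $\mathcal{L}$ reaches its optimum (maximum) at $$\langle\mathbf{w}_i,\mathbf{c}_j\rangle=\sigma\Big(\log\frac{p(i,j)}{p(i)p(j)}-\log k\Big)\quad\text{for all } i,j\in\mathcal{W},$$ where $\sigma(x)=\frac{1}{1+e^{-x}}$ is the logistic sigmoid.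
   Context: The quantity $\mathrm{PMI}_{ij}=\log\frac{p(i,j)}{p(i)p(j)}$ is the pointwise mutual information, and $\sigma\mathrm{SPMI}_{ij}:=\sigma(\mathrm{PMI}_{ij}-\log k)$ is called the squashed shifted PMI matrix. Co-occurrence counts $\#(i,j)$ count how often words $i$ and $j$ appear together within a fixed-size context window of a corpus. *)

theory Defs
  imports Complex_Main
begin

definition total_count :: "(nat \<Rightarrow> nat \<Rightarrow> real) \<Rightarrow> nat \<Rightarrow> real" where
  "total_count cnt n = (\<Sum>i\<in>{1..n}. \<Sum>j\<in>{1..n}. cnt i j)"

definition word_count :: "(nat \<Rightarrow> nat \<Rightarrow> real) \<Rightarrow> nat \<Rightarrow> nat \<Rightarrow> real" where
  "word_count cnt n i = (\<Sum>j\<in>{1..n}. cnt i j)"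

definition p_joint :: "(nat \<Rightarrow> nat \<Rightarrow> real) \<Rightarrow> nat \<Rightarrow> nat \<Rightarrow> nat \<Rightarrow> real" where
  "p_joint cnt n i j = cnt i j / total_count cnt n"

definition p_word :: "(nat \<Rightarrow> nat \<Rightarrow> real) \<Rightarrow> nat \<Rightarrow> nat \<Rightarrow> real" where
  "p_word cnt n i = word_count cnt n i / total_count cnt n"

definition PMI :: "(nat \<Rightarrow> nat \<Rightarrow> real) \<Rightarrow> nat \<Rightarrow> nat \<Rightarrow> nat \<Rightarrow> real" where
  "PMI cnt n i j = ln (p_joint cnt n i j / (p_word cnt n i * p_word cnt n j))"

definition sigmoid :: "real \<Rightarrow> real" where
  "sigmoid x = 1 / (1 + exp (- x))"

text \<open>The SGNS objective as a function of the independent variables x i j = <w_i, c_j>;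
  the expectation over the unigram distribution P(j') = p(j') is written out as a finite sum.\<close>
definition sgns_objective ::
  "(nat \<Rightarrow> nat \<Rightarrow> real) \<Rightarrow> nat \<Rightarrow> real \<Rightarrow> (nat \<Rightarrow> nat \<Rightarrow> real) \<Rightarrow> real" where
  "sgns_objective cnt n k x =
     (\<Sum>i\<in>{1..n}. \<Sum>j\<in>{1..n}.
        cnt i j * (ln (x i j) + k * (\<Sum>j'\<in>{1..n}. p_word cnt n j' * ln (1 - x i j'))))"

end

theory Submission
  imports Defs
begin

lemma pointwise:
  fixes a b x :: real
  assumes a: "a > 0" and b: "b > 0" and x: "0 < x" "x < 1"
  shows "a * ln x + b * ln (1 - x) \<le> a * ln (a/(a+b)) + b * ln (1 - a/(a+b))"
proof -
  define y where "y = a/(a+b)"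
  have y: "0 < y" "y < 1" using a b by (auto simp: y_def field_simps)
  have 1: "ln (x/y) \<le> x/y - 1" using x y by (intro ln_le_minus_one) auto
  have 2: "ln ((1-x)/(1-y)) \<le> (1-x)/(1-y) - 1" using x y by (intro ln_le_minus_one) auto
  have "a * ln (x/y) + b * ln ((1-x)/(1-y)) \<le> a * (x/y - 1) + b * ((1-x)/(1-y) - 1)"
    using 1 2 a b by (intro add_mono mult_left_mono) auto
  also have "\<dots> = 0"
  proof -
    have "1 - y = b/(a+b)" using a b by (simp add: y_def field_simps)
    then show ?thesis using a b by (simp add: y_def field_simps)
  qed
  finally have "a * ln (x/y) + b * ln ((1-x)/(1-y)) \<le> 0" .
  moreover have "ln (x/y) = ln x - ln y" "ln ((1-x)/(1-y)) = ln (1-x) - ln (1-y)"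
    using x y by (auto simp: ln_div)
  ultimately show ?thesis unfolding y_def[symmetric] by (simp add: algebra_simps)
qed

lemma obj_rewrite:
  "sgns_objective cnt n k x =
   (\<Sum>i\<in>{1..n}. \<Sum>j\<in>{1..n}. cnt i j * ln (x i j)
       + (k * word_count cnt n i * p_word cnt n j) * ln (1 - x i j))"
proof -
  have "\<And>i. (\<Sum>j\<in>{1..n}. cnt i j * (ln (x i j) + k * (\<Sum>j'\<in>{1..n}. p_word cnt n j' * ln (1 - x i j'))))
     = (\<Sum>j\<in>{1..n}. cnt i j * ln (x i j)
       + (k * word_count cnt n i * p_word cnt n j) * ln (1 - x i j))"
  proof -
    fix i
    have "(\<Sum>j\<in>{1..n}. cnt i j * (ln (x i j) + k * (\<Sum>j'\<in>{1..n}. p_word cnt n j' * ln (1 - x i j'))))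
      = (\<Sum>j\<in>{1..n}. cnt i j * ln (x i j)) + word_count cnt n i * (k * (\<Sum>j'\<in>{1..n}. p_word cnt n j' * ln (1 - x i j')))"
      by (simp add: distrib_left sum.distrib word_count_def sum_distrib_right)
    also have "\<dots> = (\<Sum>j\<in>{1..n}. cnt i j * ln (x i j)) + (\<Sum>j\<in>{1..n}. (k * word_count cnt n i * p_word cnt n j) * ln (1 - x i j))"
      by (simp add: sum_distrib_left mult_ac)
    finally show "?thesis i" by (simp add: sum.distrib)
  qed
  then show ?thesis unfolding sgns_objective_def by simp
qed

theorem theorem1:
  fixes cnt :: "nat \<Rightarrow> nat \<Rightarrow> real" and n :: nat and k :: real
  assumes cnt_pos: "\<And>i j. i \<in> {1..n} \<Longrightarrow> j \<in> {1..n} \<Longrightarrow> cnt i j > 0"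
    and k_pos: "k > 0"
  defines "xopt \<equiv> (\<lambda>i j. sigmoid (PMI cnt n i j - ln k))"
  shows "(\<forall>i\<in>{1..n}. \<forall>j\<in>{1..n}. 0 < xopt i j \<and> xopt i j < 1)
    \<and> (\<forall>x. (\<forall>i\<in>{1..n}. \<forall>j\<in>{1..n}. 0 < x i j \<and> x i j < 1)
           \<longrightarrow> sgns_objective cnt n k x \<le> sgns_objective cnt n k xopt)"
proof -
  define b where "b = (\<lambda>i j. k * word_count cnt n i * p_word cnt n j)"
  have wc: "word_count cnt n i > 0" if "i \<in> {1..n}" for i
    unfolding word_count_def using that cnt_pos by (intro sum_pos) auto
  have N: "total_count cnt n > 0" if "i \<in> {1..n}" for i
    unfolding total_count_def by (rule sum_pos) (use that wc in \<open>auto simp: word_count_def\<close>)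
  have bpos: "b i j > 0" if "i \<in> {1..n}" "j \<in> {1..n}" for i j
    using that wc N k_pos by (auto simp: b_def p_word_def)
  have xo: "xopt i j = cnt i j / (cnt i j + b i j)" if i: "i \<in> {1..n}" and j: "j \<in> {1..n}" for i j
  proof -
    define A where "A = cnt i j" define Wi where "Wi = word_count cnt n i"
    define Wj where "Wj = word_count cnt n j" define T where "T = total_count cnt n"
    have pos: "A > 0" "Wi > 0" "Wj > 0" "T > 0" using cnt_pos wc N i j
      by (auto simp: A_def Wi_def Wj_def T_def)
    have q: "PMI cnt n i j = ln (A * T / (Wi * Wj))"
      unfolding PMI_def p_joint_def p_word_def A_def[symmetric] Wi_def[symmetric] Wj_def[symmetric] T_def[symmetric]
      using pos by (simp add: field_simps)
    have "exp (- (PMI cnt n i j - ln k)) = k * Wi * Wj / (A * T)"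
      using pos k_pos by (simp add: q exp_diff field_simps)
    moreover have "b i j = k * Wi * Wj / T" by (simp add: b_def p_word_def Wi_def Wj_def T_def)
    ultimately have "T * (A * exp (- (PMI cnt n i j - ln k))) = T * b i j" using pos by (simp add: field_simps)
    then have "A * exp (- (PMI cnt n i j - ln k)) = b i j" using pos by simp
    then have e: "exp (- (PMI cnt n i j - ln k)) = b i j / A" using pos by (simp add: field_simps)
    have "xopt i j = 1 / (1 + b i j / A)" by (simp only: xopt_def sigmoid_def e)
    also have "\<dots> = A / (A + b i j)" using pos bpos[OF i j] by (simp add: field_simps)
    finally show ?thesis by (simp add: A_def)
  qed
  have part1: "\<forall>i\<in>{1..n}. \<forall>j\<in>{1..n}. 0 < xopt i j \<and> xopt i j < 1"
  proof (intro ballI)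
    fix i j assume i: "i \<in> {1..n}" and j: "j \<in> {1..n}"
    show "0 < xopt i j \<and> xopt i j < 1"
      using xo[OF i j] cnt_pos[OF i j] bpos[OF i j] by (simp add: divide_less_eq)
  qed
  have part2: "sgns_objective cnt n k x \<le> sgns_objective cnt n k xopt"
    if hx: "\<forall>i\<in>{1..n}. \<forall>j\<in>{1..n}. 0 < x i j \<and> x i j < 1" for x
  proof -
    have "\<And>i j. i \<in> {1..n} \<Longrightarrow> j \<in> {1..n} \<Longrightarrow> cnt i j * ln (x i j) + b i j * ln (1 - x i j) \<le> cnt i j * ln (xopt i j) + b i j * ln (1 - xopt i j)"
      using pointwise cnt_pos bpos hx xo by auto
    then show ?thesis unfolding obj_rewrite b_def[symmetric]
      by (intro sum_mono) (auto simp: b_def)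
  qed
  show ?thesis using part1 part2 by blast
qed

end
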